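(* Let $a>1$, $\hbar>0$, $p\in\mathbb{R}^d$, and $C_k(n,a)=\binom{n}{k}\left(\frac{1+a}{2}\right)^{n-k}\left(\frac{1-a}{2}\right)^k$. Then: (a) The sequence $F_n(x)=\sum_{k=0}^n C_k(n,a)\exp\bigl[\frac{ip\cdot x}{\hbar}(1-\frac{2k}{n})\bigr]$ converges to $F(x)=e^{iap\cdot x/\hbar}$ for every $x\in\mathbb{R}^d$, uniformly on compact subsets of $\mathbb{R}^d$. (b) If $q$ is an even positive integer, the sequence $Y_n(x)=\sum_{k=0}^n C_k(n,a)\exp\bigl[\frac{ip\cdot x}{\hbar}(-i)^q(1-\frac{2k}{n})^q\bigr]$ converges to $Y(x)=e^{ip\cdot x(-ia)^q/\hbar}$ for every $x\in\mathbb{R}^d$, uniformly on compact subsets of $\mathbb{R}^d$. (c) If $q$ is an odd positive integer, the sequence $Z_n(x)=\sum_{k=0}^n C_k(n,a)\exp\bigl[\frac{p\cdot x}{\hbar}(-i)^q(1-\frac{2k}{n})^q\bigr]$ converges to $Z(x)=e^{p\cdot x(-ia)^q/\hbar}$ for every $x\in\mathbb{R}^d$, uniformly on compact subsets of $\mathbb{R}^d$. *)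

theory Defs
  imports "HOL-Analysis.Analysis"
begin

definition Ccoef :: "nat \<Rightarrow> nat \<Rightarrow> real \<Rightarrow> real" where
  "Ccoef k n a = real (n choose k) * ((1 + a) / 2) ^ (n - k) * ((1 - a) / 2) ^ k"

end

theory Submission
  imports Defs
begin


definition T :: "real \<Rightarrow> nat \<Rightarrow> (nat \<Rightarrow> real) \<Rightarrow> real" where
  "T a n h = (\<Sum>k\<le>n. Ccoef k n a * h k)"

lemma Ccoef_0_Suc: "Ccoef 0 (Suc n) a = (1+a)/2 * Ccoef 0 n a"
  by (simp add: Ccoef_def)

lemma Ccoef_Suc_Suc: "k \<le> n \<Longrightarrow> Ccoef (Suc k) (Suc n) a = (1+a)/2 * Ccoef (Suc k) n a + (1-a)/2 * Ccoef k n a"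
proof (cases "k = n")
  case True
  then show ?thesis by (simp add: Ccoef_def)
next
  case False
  assume "k \<le> n"
  with False have "k < n" by simp
  then have e: "n - k = Suc (n - Suc k)" by simp
  have g: "\<And>x y::real. real (Suc n choose Suc k) * x ^ (Suc n - Suc k) * y ^ Suc k
     = x * (real (n choose Suc k) * x ^ (n - Suc k) * y ^ Suc k) + y * (real (n choose k) * x ^ (n - k) * y ^ k)"
    by (simp only: e binomial_Suc_Suc diff_Suc_Suc of_nat_add power_Suc) (simp add: algebra_simps)
  show ?thesis unfolding Ccoef_def by (rule g)
qed

lemma Ccoef_Suc_self: "Ccoef (Suc n) n a = 0" by (simp add: Ccoef_def)

lemma T_Suc: "T a (Suc n) h = (1+a)/2 * T a n h + (1-a)/2 * T a n (\<lambda>k. h (Suc k))"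
proof -
  have "T a (Suc n) h = Ccoef 0 (Suc n) a * h 0 + (\<Sum>k\<le>n. Ccoef (Suc k) (Suc n) a * h (Suc k))"
    unfolding T_def by (subst sum.atMost_Suc_shift) simp
  also have "\<dots> = (1+a)/2 * (Ccoef 0 n a * h 0 + (\<Sum>k\<le>n. Ccoef (Suc k) n a * h (Suc k)))
       + (1-a)/2 * (\<Sum>k\<le>n. Ccoef k n a * h (Suc k))"
    by (simp add: Ccoef_0_Suc Ccoef_Suc_Suc algebra_simps sum.distrib sum_distrib_left)
  also have "Ccoef 0 n a * h 0 + (\<Sum>k\<le>n. Ccoef (Suc k) n a * h (Suc k)) = T a n h"
  proof -
    have "T a n h + Ccoef (Suc n) n a * h (Suc n) = Ccoef 0 n a * h 0 + (\<Sum>k\<le>n. Ccoef (Suc k) n a * h (Suc k))"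
      unfolding T_def by (subst sum.atMost_Suc_shift[symmetric]) simp
    then show ?thesis by (simp add: Ccoef_Suc_self)
  qed
  finally show ?thesis by (simp add: T_def)
qed

lemma T_sum: "T a n (\<lambda>k. \<Sum>i\<in>I. f i k) = (\<Sum>i\<in>I. T a n (f i))"
  unfolding T_def by (simp add: sum_distrib_left sum.swap[of _ I])

lemma T_cmult: "T a n (\<lambda>k. c * f k) = c * T a n f"
  unfolding T_def by (simp add: sum_distrib_left algebra_simps)

definition N :: "real \<Rightarrow> nat \<Rightarrow> nat \<Rightarrow> real" where
  "N a n j = T a n (\<lambda>k. (real n - 2 * real k) ^ j)"

definition cc :: "real \<Rightarrow> nat \<Rightarrow> real" where
  "cc a m = (if even m then 1 else a)"

lemma N_Suc: "N a (Suc n) j = (\<Sum>i\<le>j. real (j choose i) * cc a (j - i) * N a n i)"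
proof -
  have "N a (Suc n) j = (1+a)/2 * T a n (\<lambda>k. ((real n - 2 * real k) + 1) ^ j)
        + (1-a)/2 * T a n (\<lambda>k. ((real n - 2 * real k) + (-1)) ^ j)"
    unfolding N_def T_Suc by (simp add: algebra_simps)
  also have "\<dots> = (1+a)/2 * (\<Sum>i\<le>j. real (j choose i) * N a n i)
        + (1-a)/2 * (\<Sum>i\<le>j. real (j choose i) * (-1)^(j-i) * N a n i)"
    unfolding binomial_ring T_sum
    by (simp add: N_def T_cmult mult.assoc mult.left_commute[of "(-1)^_"] mult.commute[of _ "(-1)^_"])
  also have "\<dots> = (\<Sum>i\<le>j. real (j choose i) * cc a (j - i) * N a n i)"
    unfolding sum_distrib_left sum.distrib[symmetric]
    by (rule sum.cong) (auto simp: cc_def field_simps neg_one_even_power neg_one_odd_power)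
  finally show ?thesis .
qed

lemma cc_nonneg: "a \<ge> 1 \<Longrightarrow> 0 \<le> cc a m" by (simp add: cc_def)

lemma cc_le: "a \<ge> 1 \<Longrightarrow> cc a m \<le> a ^ m"
proof (cases "even m")
  case True then show "a \<ge> 1 \<Longrightarrow> ?thesis" by (simp add: cc_def one_le_power)
next
  case False
  then obtain t where "m = Suc t" by (cases m) auto
  then show "a \<ge> 1 \<Longrightarrow> ?thesis" using False
    by (simp add: cc_def)
qed

lemma N_0: "N a 0 j = 0 ^ j" by (simp add: N_def T_def Ccoef_def)

lemma N_bounds: "a \<ge> 1 \<Longrightarrow> 0 \<le> N a n j \<and> N a n j \<le> (a * real n) ^ j"
proof (induction n arbitrary: j)
  case 0 then show ?case by (simp add: N_0)
next
  case (Suc n)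
  have nn: "0 \<le> N a (Suc n) j" unfolding N_Suc
    using Suc by (intro sum_nonneg mult_nonneg_nonneg cc_nonneg) auto
  have "N a (Suc n) j \<le> (\<Sum>i\<le>j. real (j choose i) * (a * real n) ^ i * a ^ (j - i))"
    unfolding N_Suc
  proof (rule sum_mono)
    fix i assume "i \<in> {..j}"
    have h: "cc a (j - i) * N a n i \<le> a ^ (j - i) * (a * real n) ^ i"
      using Suc cc_le cc_nonneg by (intro mult_mono) auto
    then show "real (j choose i) * cc a (j - i) * N a n i \<le> real (j choose i) * (a * real n) ^ i * a ^ (j - i)"
      using mult_left_mono[OF h, of "real (j choose i)"] by (simp add: ac_simps)
  qed
  also have "\<dots> = (a * real n + a) ^ j" by (simp add: binomial_ring)
  also have "\<dots> = (a * real (Suc n)) ^ j" by (simp add: algebra_simps)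
  finally show ?case using nn by simp
qed

lemma N_zero_exp: "N a n 0 = 1"
  by (induction n) (simp_all add: N_0 N_Suc cc_def)

lemma N_one_exp: "N a n 1 = a * real n"
  by (induction n) (simp_all add: N_0 N_Suc cc_def N_zero_exp algebra_simps)

definition D :: "real \<Rightarrow> nat \<Rightarrow> nat \<Rightarrow> real" where
  "D a n j = (a * real n) ^ j - N a n j"

lemma D_Suc: "D a (Suc n) j = (\<Sum>i\<le>j. real (j choose i) * ((a ^ (j - i) - cc a (j - i)) * (a * real n) ^ i + cc a (j - i) * D a n i))"
proof -
  have "(a * real (Suc n)) ^ j = (a * real n + a) ^ j" by (simp add: algebra_simps)
  also have "\<dots> = (\<Sum>i\<le>j. real (j choose i) * (a * real n) ^ i * a ^ (j - i))" by (simp add: binomial_ring)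
  finally have 1: "(a * real (Suc n)) ^ j = \<dots>" .
  show ?thesis unfolding D_def 1 N_Suc sum_subtractf[symmetric]
    by (rule sum.cong) (auto simp: algebra_simps)
qed

lemma D_nonneg: "a \<ge> 1 \<Longrightarrow> 0 \<le> D a n j"
  using N_bounds[of a n j] by (simp add: D_def)

lemma D_bound:
  assumes a1: "a \<ge> 1"
  shows "\<exists>B\<ge>0. \<forall>n. D a n j \<le> B * real (n+1) ^ (j-1)"
proof (induction j rule: less_induct)
  case (less j)
  show ?case
  proof (cases "j < 2")
    case True
    then have "j = 0 \<or> j = 1" by auto
    then have "\<forall>n. D a n j = 0" using N_one_exp[of a] by (auto simp: D_def N_zero_exp)
    then show ?thesis by (intro exI[of _ 0]) auto
  next
    case False
    from less.IH have "\<forall>i. \<exists>B. i < j \<longrightarrow> B \<ge> 0 \<and> (\<forall>n. D a n i \<le> B * real (n+1) ^ (i-1))"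
      by blast
    then obtain Bf where Bf: "\<And>i. i < j \<Longrightarrow> Bf i \<ge> 0 \<and> (\<forall>n. D a n i \<le> Bf i * real (n+1) ^ (i-1))"
      by metis
    define E where "E = (\<Sum>i<j. real (j choose i) * (a^(2*j) + a^j * Bf i))"
    have E0: "E \<ge> 0" unfolding E_def using Bf a1 by (intro sum_nonneg) auto
    have inc: "D a (Suc n) j \<le> D a n j + E * real (n+1) ^ (j-2)" for n
    proof -
      have "D a (Suc n) j = D a n j + (\<Sum>i<j. real (j choose i) * ((a^(j-i) - cc a (j-i)) * (a*real n)^i + cc a (j-i) * D a n i))"
        unfolding D_Suc by (simp add: lessThan_Suc_atMost[symmetric] cc_def)
      also have "\<dots> \<le> D a n j + (\<Sum>i<j. real (j choose i) * (a^(2*j) + a^j * Bf i) * real (n+1) ^ (j-2))"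
      proof (intro add_left_mono sum_mono)
        fix i assume "i \<in> {..<j}"
        then have ij: "i < j" by simp
        have t1: "(a^(j-i) - cc a (j-i)) * (a*real n)^i \<le> a^(2*j) * real (n+1) ^ (j-2)"
        proof (cases "i = j - 1")
          case True
          then have "j - i = 1" using ij by simp
          then show ?thesis using a1 by (simp add: cc_def)
        next
          case False
          then have i2: "i \<le> j - 2" using ij by simp
          have f1: "0 \<le> a^(j-i) - cc a (j-i)" using cc_le[OF a1] by simp
          have f2: "a^(j-i) - cc a (j-i) \<le> a ^ j"
            using cc_nonneg[OF a1, of "j-i"] power_increasing[OF _ a1, of "j-i" j] by simp
          have f3: "(a*real n)^i \<le> a^j * real (n+1) ^ (j-2)"
          proof -
            have "(a*real n)^i = a^i * real n ^ i" by (simp add: power_mult_distrib)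
            also have "\<dots> \<le> a^j * real (n+1) ^ (j-2)"
            proof (rule mult_mono)
              show "a^i \<le> a^j" using ij a1 by (intro power_increasing) auto
              have "real n ^ i \<le> real (n+1) ^ i" by (intro power_mono) auto
              also have "\<dots> \<le> real (n+1) ^ (j-2)" using i2 by (intro power_increasing) auto
              finally show "real n ^ i \<le> real (n+1) ^ (j-2)" .
            qed (use a1 in auto)
            finally show ?thesis .
          qed
          have "(a^(j-i) - cc a (j-i)) * (a*real n)^i \<le> a^j * (a^j * real (n+1) ^ (j-2))"
            using f1 f2 f3 a1 by (intro mult_mono) auto
          then show ?thesis by (simp add: power_add mult_2 mult.assoc)
        qed
        have t2: "cc a (j-i) * D a n i \<le> a^j * Bf i * real (n+1) ^ (j-2)"
        proof -
          have "cc a (j-i) * D a n i \<le> cc a (j-i) * (Bf i * real (n+1) ^ (i-1))"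
            using Bf[OF ij] cc_nonneg[OF a1] by (intro mult_left_mono) auto
          also have "\<dots> \<le> a^j * (Bf i * real (n+1) ^ (j-2))"
          proof (rule mult_mono)
            show "cc a (j-i) \<le> a^j" using cc_le[OF a1, of "j-i"] power_increasing[OF _ a1, of "j-i" j] by simp
            show "Bf i * real (n+1) ^ (i-1) \<le> Bf i * real (n+1) ^ (j-2)"
              using Bf[OF ij] ij by (intro mult_left_mono power_increasing) auto
          qed (use a1 Bf[OF ij] in auto)
          finally show ?thesis by (simp add: mult.assoc)
        qed
        show "real (j choose i) * ((a^(j-i) - cc a (j-i)) * (a*real n)^i + cc a (j-i) * D a n i)
              \<le> real (j choose i) * (a^(2*j) + a^j * Bf i) * real (n+1) ^ (j-2)"
          using mult_left_mono[OF add_mono[OF t1 t2], of "real (j choose i)"] by (simp add: algebra_simps)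
      qed
      also have "\<dots> = D a n j + E * real (n+1) ^ (j-2)"
        by (simp add: E_def sum_distrib_right)
      finally show ?thesis .
    qed
    have main: "D a n j \<le> E * real n * real (n+1) ^ (j-2)" for n
    proof (induction n)
      case 0 then show ?case using False by (simp add: D_def N_0)
    next
      case (Suc n)
      have "D a (Suc n) j \<le> E * real n * real (n+1) ^ (j-2) + E * real (n+1) ^ (j-2)"
        using inc[of n] Suc by simp
      also have "\<dots> = E * real (Suc n) * real (n+1) ^ (j-2)" by (simp add: algebra_simps)
      also have "\<dots> \<le> E * real (Suc n) * real (Suc n+1) ^ (j-2)"
        using E0 by (intro mult_left_mono power_mono) auto
      finally show ?case .
    qed
    show ?thesis
    proof (intro exI[of _ E] conjI allI E0)
      fix n
      have "E * real n * real (n+1) ^ (j-2) \<le> E * real (n+1) * real (n+1) ^ (j-2)"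
        using E0 by (intro mult_right_mono mult_left_mono) auto
      also have "\<dots> = E * real (n+1) ^ (j-1)"
      proof -
        have "j - 1 = Suc (j - 2)" using False by simp
        then show ?thesis by (simp only: power_Suc mult.assoc)
      qed
      finally show "D a n j \<le> E * real (n+1) ^ (j-1)" using main[of n] by linarith
    qed
  qed
qed

definition Mom :: "real \<Rightarrow> nat \<Rightarrow> nat \<Rightarrow> real" where
  "Mom a n j = T a n (\<lambda>k. (1 - 2 * real k / real n) ^ j)"

lemma Mom_N: "n > 0 \<Longrightarrow> Mom a n j = N a n j / real n ^ j"
proof -
  assume n: "n > 0"
  have "(\<lambda>k. (1 - 2 * real k / real n) ^ j) = (\<lambda>k. (1 / real n ^ j) * (real n - 2 * real k) ^ j)"
  proof
    fix k
    have "1 - 2 * real k / real n = (real n - 2 * real k) / real n" using n by (simp add: diff_divide_distrib)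
    then show "(1 - 2 * real k / real n) ^ j = (1 / real n ^ j) * (real n - 2 * real k) ^ j"
      by (simp add: power_divide)
  qed
  then show ?thesis unfolding Mom_def N_def by (simp only: T_cmult) simp
qed

lemma Mom_bounds: "a \<ge> 1 \<Longrightarrow> n > 0 \<Longrightarrow> 0 \<le> Mom a n j \<and> Mom a n j \<le> a ^ j"
  using N_bounds[of a n j] by (auto simp: Mom_N power_mult_distrib divide_le_eq)

lemma Mom_lim:
  assumes a1: "a \<ge> 1"
  shows "(\<lambda>n. Mom a n j) \<longlonglongrightarrow> a ^ j"
proof -
  have L: "(\<lambda>n. D a n j / real n ^ j) \<longlonglongrightarrow> 0"
  proof (cases "j = 0")
    case True then show ?thesis by (simp add: D_def N_zero_exp)
  next
    case False
    obtain B where B: "B \<ge> 0" "\<And>n. D a n j \<le> B * real (n+1) ^ (j-1)" using D_bound[OF a1, of j] by blast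
    have lim: "(\<lambda>n. B * (real (Suc n) / real n) ^ (j-1) * inverse (real n)) \<longlonglongrightarrow> B * 1 ^ (j-1) * 0"
      by (intro tendsto_mult tendsto_power tendsto_const LIMSEQ_Suc_n_over_n lim_inverse_n)
    then have lim0: "(\<lambda>n. B * (real (Suc n) / real n) ^ (j-1) * inverse (real n)) \<longlonglongrightarrow> 0"
      by (simp only: power_one mult_zero_right)
    show ?thesis
    proof (rule tendsto_sandwich[OF _ _ tendsto_const lim0])
      show "\<forall>\<^sub>F n in sequentially. 0 \<le> D a n j / real n ^ j"
        using D_nonneg[OF a1] by (intro always_eventually allI) simp
      show "\<forall>\<^sub>F n in sequentially. D a n j / real n ^ j \<le> B * (real (Suc n) / real n) ^ (j-1) * inverse (real n)"
      proof (rule eventually_sequentiallyI[of 1])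
        fix n :: nat assume n: "n \<ge> 1"
        have "D a n j / real n ^ j \<le> B * real (n+1) ^ (j-1) / real n ^ j"
          using B(2)[of n] n by (intro divide_right_mono) auto
        also have "\<dots> = B * (real (Suc n) / real n) ^ (j-1) * inverse (real n)"
        proof -
          have "j = Suc (j - 1)" using False by simp
          then have "real n ^ j = real n ^ (j-1) * real n" by (metis power_Suc2)
          then show ?thesis using n by (simp add: power_divide divide_simps)
        qed
        finally show "D a n j / real n ^ j \<le> B * (real (Suc n) / real n) ^ (j-1) * inverse (real n)" .
      qed
    qed
  qed
  have "(\<lambda>n. a ^ j - D a n j / real n ^ j) \<longlonglongrightarrow> a ^ j - 0"
    by (intro tendsto_diff tendsto_const L)
  then have "(\<lambda>n. a ^ j - D a n j / real n ^ j) \<longlonglongrightarrow> a ^ j" by simp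
  then show ?thesis
  proof (rule Lim_transform_eventually)
    show "\<forall>\<^sub>F n in sequentially. a ^ j - D a n j / real n ^ j = Mom a n j"
    proof (rule eventually_sequentiallyI[of 1])
      fix n :: nat assume n: "n \<ge> 1"
      then show "a ^ j - D a n j / real n ^ j = Mom a n j"
        by (simp add: Mom_N D_def power_mult_distrib diff_divide_distrib)
    qed
  qed
qed

definition H :: "real \<Rightarrow> nat \<Rightarrow> nat \<Rightarrow> complex \<Rightarrow> complex" where
  "H a q n z = (\<Sum>k=0..n. complex_of_real (Ccoef k n a) * exp (z * complex_of_real ((1 - 2 * real k / real n) ^ q)))"

lemma H_sums: "(\<lambda>m. z ^ m / of_real (fact m) * of_real (Mom a n (q * m))) sums H a q n z"
proof -
  let ?y = "\<lambda>k. (1 - 2 * real k / real n) ^ q"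
  have "\<And>k. (\<lambda>m. complex_of_real (Ccoef k n a) * ((z * of_real (?y k)) ^ m /\<^sub>R fact m))
      sums (complex_of_real (Ccoef k n a) * exp (z * of_real (?y k)))"
    by (intro sums_mult exp_converges)
  then have "(\<lambda>m. \<Sum>k\<in>{0..n}. complex_of_real (Ccoef k n a) * ((z * of_real (?y k)) ^ m /\<^sub>R fact m)) sums H a q n z"
    unfolding H_def by (rule sums_sum)
  moreover have "(\<lambda>m. \<Sum>k\<in>{0..n}. complex_of_real (Ccoef k n a) * ((z * of_real (?y k)) ^ m /\<^sub>R fact m))
     = (\<lambda>m. z ^ m / of_real (fact m) * of_real (Mom a n (q * m)))"
  proof
    fix m
    have "(\<Sum>k\<in>{0..n}. complex_of_real (Ccoef k n a) * ((z * of_real (?y k)) ^ m /\<^sub>R fact m))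
       = (\<Sum>k\<in>{0..n}. z ^ m / of_real (fact m) * of_real (Ccoef k n a * (1 - 2 * real k / real n) ^ (q * m)))"
      by (rule sum.cong) (simp_all add: scaleR_conv_of_real power_mult_distrib power_mult[symmetric] divide_inverse ac_simps)
    also have "\<dots> = z ^ m / of_real (fact m) * of_real (Mom a n (q * m))"
      by (simp add: Mom_def T_def sum_distrib_left atLeast0AtMost)
    finally show "(\<Sum>k\<in>{0..n}. complex_of_real (Ccoef k n a) * ((z * of_real (?y k)) ^ m /\<^sub>R fact m))
       = z ^ m / of_real (fact m) * of_real (Mom a n (q * m))" .
  qed
  ultimately show ?thesis by simp
qed

lemma exp_sums': "(\<lambda>m. z ^ m / of_real (fact m) * of_real (a ^ (q * m))) sums exp (z * complex_of_real (a ^ q))"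
proof -
  have "(\<lambda>m. (z * complex_of_real (a ^ q)) ^ m /\<^sub>R fact m) sums exp (z * complex_of_real (a ^ q))"
    by (rule exp_converges)
  moreover have "(\<lambda>m. (z * complex_of_real (a ^ q)) ^ m /\<^sub>R fact m) = (\<lambda>m. z ^ m / of_real (fact m) * of_real (a ^ (q * m)))"
    by (rule ext) (simp add: scaleR_conv_of_real power_mult_distrib power_mult[symmetric] divide_inverse ac_simps)
  ultimately show ?thesis by simp
qed

definition W :: "real \<Rightarrow> nat \<Rightarrow> real \<Rightarrow> nat \<Rightarrow> real" where
  "W a q R n = (\<Sum>m. R ^ m / fact m * \<bar>Mom a n (q * m) - a ^ (q * m)\<bar>)"

lemma summable_M: "summable (\<lambda>m. R ^ m / fact m * (a::real) ^ (q * m))"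
proof -
  have "summable (\<lambda>m. inverse (fact m) * (R * a ^ q) ^ m)" by (rule summable_exp)
  moreover have "(\<lambda>m. inverse (fact m) * (R * a ^ q) ^ m) = (\<lambda>m. R ^ m / fact m * (a::real) ^ (q * m))"
    by (rule ext) (simp add: power_mult_distrib power_mult[symmetric] divide_inverse ac_simps)
  ultimately show ?thesis by simp
qed

lemma W_lim:
  assumes a1: "a \<ge> 1" and R: "R \<ge> 0"
  shows "W a q R \<longlonglongrightarrow> 0"
proof -
  have "eventually (\<lambda>n. summable (\<lambda>k. norm (R ^ k / fact k * \<bar>Mom a n (q * k) - a ^ (q * k)\<bar>))) sequentially \<and>
           summable (\<lambda>n. norm ((\<lambda>_. 0::real) n)) \<and>
           ((\<lambda>n. suminf (\<lambda>k. R ^ k / fact k * \<bar>Mom a n (q * k) - a ^ (q * k)\<bar>)) \<longlongrightarrow> suminf (\<lambda>_. 0::real)) sequentially"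
  proof (rule tannerys_theorem[where M = "\<lambda>m. R ^ m / fact m * a ^ (q * m)"])
    fix k
    have "(\<lambda>n. R ^ k / fact k * \<bar>Mom a n (q * k) - a ^ (q * k)\<bar>) \<longlonglongrightarrow> R ^ k / fact k * \<bar>a ^ (q * k) - a ^ (q * k)\<bar>"
      by (intro tendsto_mult tendsto_const tendsto_rabs tendsto_diff Mom_lim a1)
    then show "(\<lambda>n. R ^ k / fact k * \<bar>Mom a n (q * k) - a ^ (q * k)\<bar>) \<longlonglongrightarrow> 0" by simp
  next
    show "summable (\<lambda>m. R ^ m / fact m * a ^ (q * m))" by (rule summable_M)
  next
    show "\<forall>\<^sub>F (k, n) in at_top \<times>\<^sub>F sequentially. norm (R ^ k / fact k * \<bar>Mom a n (q * k) - a ^ (q * k)\<bar>) \<le> R ^ k / fact k * a ^ (q * k)"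
      unfolding eventually_prod_filter
    proof (intro exI conjI)
      show "eventually (\<lambda>_. True) at_top" by simp
      show "eventually (\<lambda>n::nat. n \<ge> 1) sequentially" by (rule eventually_ge_at_top)
      show "\<forall>k n. True \<longrightarrow> n \<ge> 1 \<longrightarrow> (case (k, n) of (k, n) \<Rightarrow> norm (R ^ k / fact k * \<bar>Mom a n (q * k) - a ^ (q * k)\<bar>) \<le> R ^ k / fact k * a ^ (q * k))"
      proof (intro allI impI)
        fix k n :: nat assume "n \<ge> 1"
        then have "0 \<le> Mom a n (q * k)" "Mom a n (q * k) \<le> a ^ (q * k)" using Mom_bounds[OF a1] by auto
        then have "\<bar>Mom a n (q * k) - a ^ (q * k)\<bar> \<le> a ^ (q * k)" by simp
        then show "case (k, n) of (k, n) \<Rightarrow> norm (R ^ k / fact k * \<bar>Mom a n (q * k) - a ^ (q * k)\<bar>) \<le> R ^ k / fact k * a ^ (q * k)"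
          using R by (simp add: abs_mult, intro divide_right_mono mult_left_mono) auto
      qed
    qed
  qed simp
  then show ?thesis unfolding W_def by simp
qed

lemma H_close:
  assumes a1: "a \<ge> 1" and n: "n \<ge> 1" and z: "norm z \<le> R"
  shows "norm (H a q n z - exp (z * complex_of_real (a ^ q))) \<le> W a q R n"
proof -
  have "(\<lambda>m. z ^ m / of_real (fact m) * of_real (Mom a n (q * m)) - z ^ m / of_real (fact m) * of_real (a ^ (q * m)))
     sums (H a q n z - exp (z * complex_of_real (a ^ q)))"
    by (intro sums_diff H_sums exp_sums')
  then have e: "H a q n z - exp (z * complex_of_real (a ^ q)) = (\<Sum>m. z ^ m / of_real (fact m) * of_real (Mom a n (q * m)) - z ^ m / of_real (fact m) * of_real (a ^ (q * m)))"
    by (simp add: sums_iff)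
  have sm: "summable (\<lambda>m. R ^ m / fact m * \<bar>Mom a n (q * m) - a ^ (q * m)\<bar>)"
  proof (rule summable_comparison_test[OF _ summable_M])
    show "\<exists>N. \<forall>m\<ge>N. norm (R ^ m / fact m * \<bar>Mom a n (q * m) - a ^ (q * m)\<bar>) \<le> R ^ m / fact m * a ^ (q * m)"
    proof (intro exI allI impI)
      fix m :: nat
      have "0 \<le> Mom a n (q * m)" "Mom a n (q * m) \<le> a ^ (q * m)" using Mom_bounds[OF a1] n by auto
      then have "\<bar>Mom a n (q * m) - a ^ (q * m)\<bar> \<le> a ^ (q * m)" by simp
      moreover have "0 \<le> R" using z norm_ge_zero order.trans by blast
      ultimately show "norm (R ^ m / fact m * \<bar>Mom a n (q * m) - a ^ (q * m)\<bar>) \<le> R ^ m / fact m * a ^ (q * m)"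
        by (simp add: abs_mult, intro divide_right_mono mult_left_mono) auto
    qed
  qed
  show ?thesis unfolding e W_def
  proof (rule norm_suminf_le[OF _ sm])
    fix m
    have "norm (z ^ m / of_real (fact m) * of_real (Mom a n (q * m)) - z ^ m / of_real (fact m) * of_real (a ^ (q * m)))
        = norm z ^ m / fact m * \<bar>Mom a n (q * m) - a ^ (q * m)\<bar>"
    proof -
      have "z ^ m / of_real (fact m) * of_real (Mom a n (q * m)) - z ^ m / of_real (fact m) * of_real (a ^ (q * m))
          = z ^ m / of_real (fact m) * of_real (Mom a n (q * m) - a ^ (q * m))"
        by (simp only: of_real_diff right_diff_distrib)
      also have "norm \<dots> = norm z ^ m / fact m * \<bar>Mom a n (q * m) - a ^ (q * m)\<bar>"
        by (simp only: norm_mult norm_divide norm_power norm_of_real) simp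
      finally show ?thesis .
    qed
    also have "\<dots> \<le> R ^ m / fact m * \<bar>Mom a n (q * m) - a ^ (q * m)\<bar>"
      using z by (intro mult_right_mono divide_right_mono power_mono) auto
    finally show "norm (z ^ m / of_real (fact m) * of_real (Mom a n (q * m)) - z ^ m / of_real (fact m) * of_real (a ^ (q * m)))
        \<le> R ^ m / fact m * \<bar>Mom a n (q * m) - a ^ (q * m)\<bar>" .
  qed
qed

lemma unif_core:
  assumes a1: "a \<ge> 1" and R: "R \<ge> 0" and bd: "\<And>x. x \<in> K \<Longrightarrow> norm (f x) \<le> R"
  shows "uniform_limit K (\<lambda>n x. H a q n (f x)) (\<lambda>x. exp (f x * complex_of_real (a ^ q))) sequentially"
proof (rule uniform_limitI)
  fix e :: real assume e: "e > 0"
  have "\<forall>\<^sub>F n in sequentially. W a q R n < e"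
    using W_lim[OF a1 R, of q] e by (simp add: order_tendsto_iff)
  moreover have "\<forall>\<^sub>F n in sequentially. n \<ge> 1" by (rule eventually_ge_at_top)
  ultimately show "\<forall>\<^sub>F n in sequentially. \<forall>x\<in>K. dist (H a q n (f x)) (exp (f x * complex_of_real (a ^ q))) < e"
  proof eventually_elim
    case (elim n)
    show ?case
    proof
      fix x assume "x \<in> K"
      then have "norm (H a q n (f x) - exp (f x * complex_of_real (a ^ q))) \<le> W a q R n"
        using H_close[OF a1 elim(2) bd] by blast
      then show "dist (H a q n (f x)) (exp (f x * complex_of_real (a ^ q))) < e"
        using elim(1) by (simp add: dist_norm)
    qed
  qed
qed

lemma gen:
  fixes p :: "real ^ 'd" and K :: "(real ^ 'd) set"
  assumes a1: "a \<ge> 1" and h: "hbar > 0" and K: "compact K"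
  shows "uniform_limit K (\<lambda>n x. H a q n (c * complex_of_real (p \<bullet> x / hbar) * d))
           (\<lambda>x. exp (c * complex_of_real (p \<bullet> x / hbar) * d * complex_of_real (a ^ q))) sequentially"
proof -
  obtain b where b: "b > 0" "\<And>x. x \<in> K \<Longrightarrow> norm x \<le> b"
    using compact_imp_bounded[OF K] unfolding bounded_pos by blast
  let ?R = "norm c * (norm p * b / hbar) * norm d"
  show ?thesis
  proof (rule unif_core[OF a1, of ?R])
    show "0 \<le> ?R" using b h by simp
    fix x assume x: "x \<in> K"
    have "\<bar>p \<bullet> x\<bar> \<le> norm p * b"
      using Cauchy_Schwarz_ineq2[of p x] b(2)[OF x] by (meson mult_left_mono norm_ge_zero order.trans)
    then have "\<bar>p \<bullet> x / hbar\<bar> \<le> norm p * b / hbar" using h by (simp add: divide_right_mono)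
    then show "norm (c * complex_of_real (p \<bullet> x / hbar) * d) \<le> ?R"
      by (simp only: norm_mult norm_of_real) (intro mult_left_mono mult_right_mono, auto)
  qed
qed


theorem proposition2p4:
  fixes a hbar :: real and p :: "real ^ 'd"
  assumes "a > 1" and "hbar > 0"
  shows
   "((\<forall>x :: real ^ 'd.
       (\<lambda>n. \<Sum>k=0..n. complex_of_real (Ccoef k n a) *
           exp (\<i> * complex_of_real (p \<bullet> x / hbar) * complex_of_real (1 - 2 * real k / real n)))
       \<longlonglongrightarrow> exp (\<i> * complex_of_real (a * (p \<bullet> x) / hbar)))
    \<and> (\<forall>K :: (real ^ 'd) set. compact K \<longrightarrow>
       uniform_limit K
         (\<lambda>n x. \<Sum>k=0..n. complex_of_real (Ccoef k n a) *
           exp (\<i> * complex_of_real (p \<bullet> x / hbar) * complex_of_real (1 - 2 * real k / real n)))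
         (\<lambda>x. exp (\<i> * complex_of_real (a * (p \<bullet> x) / hbar))) sequentially))
   \<and> (\<forall>q::nat. q > 0 \<longrightarrow> even q \<longrightarrow>
    (\<forall>x :: real ^ 'd.
       (\<lambda>n. \<Sum>k=0..n. complex_of_real (Ccoef k n a) *
           exp (\<i> * complex_of_real (p \<bullet> x / hbar) * (- \<i>) ^ q * complex_of_real ((1 - 2 * real k / real n) ^ q)))
       \<longlonglongrightarrow> exp (\<i> * complex_of_real (p \<bullet> x) * (- \<i> * complex_of_real a) ^ q / complex_of_real hbar))
    \<and> (\<forall>K :: (real ^ 'd) set. compact K \<longrightarrow>
       uniform_limit K
         (\<lambda>n x. \<Sum>k=0..n. complex_of_real (Ccoef k n a) *
           exp (\<i> * complex_of_real (p \<bullet> x / hbar) * (- \<i>) ^ q * complex_of_real ((1 - 2 * real k / real n) ^ q)))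
         (\<lambda>x. exp (\<i> * complex_of_real (p \<bullet> x) * (- \<i> * complex_of_real a) ^ q / complex_of_real hbar))
         sequentially))
   \<and> (\<forall>q::nat. q > 0 \<longrightarrow> odd q \<longrightarrow>
    (\<forall>x :: real ^ 'd.
       (\<lambda>n. \<Sum>k=0..n. complex_of_real (Ccoef k n a) *
           exp (complex_of_real (p \<bullet> x / hbar) * (- \<i>) ^ q * complex_of_real ((1 - 2 * real k / real n) ^ q)))
       \<longlonglongrightarrow> exp (complex_of_real (p \<bullet> x) * (- \<i> * complex_of_real a) ^ q / complex_of_real hbar))
    \<and> (\<forall>K :: (real ^ 'd) set. compact K \<longrightarrow>
       uniform_limit K
         (\<lambda>n x. \<Sum>k=0..n. complex_of_real (Ccoef k n a) *
           exp (complex_of_real (p \<bullet> x / hbar) * (- \<i>) ^ q * complex_of_real ((1 - 2 * real k / real n) ^ q)))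
         (\<lambda>x. exp (complex_of_real (p \<bullet> x) * (- \<i> * complex_of_real a) ^ q / complex_of_real hbar))
         sequentially))"
  proof -
  have a1: "a \<ge> 1" using assms by simp
  have h: "hbar > 0" by fact
  have G: "\<And>K c d q. compact K \<Longrightarrow> uniform_limit K (\<lambda>n x. H a q n (c * complex_of_real (p \<bullet> x / hbar) * d))
           (\<lambda>x. exp (c * complex_of_real (p \<bullet> x / hbar) * d * complex_of_real (a ^ q))) sequentially"
    by (rule gen[OF a1 h])
  have P: "\<And>c d q x. (\<lambda>n. H a q n (c * complex_of_real (p \<bullet> x / hbar) * d))
      \<longlonglongrightarrow> exp (c * complex_of_real (p \<bullet> x / hbar) * d * complex_of_real (a ^ q))"
  proof -
    fix c d q x
    show "(\<lambda>n. H a q n (c * complex_of_real (p \<bullet> x / hbar) * d))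
      \<longlonglongrightarrow> exp (c * complex_of_real (p \<bullet> x / hbar) * d * complex_of_real (a ^ q))"
      using G[where K="{x}" and c=c and d=d and q=q] by simp
  qed
  have eA1: "(\<lambda>n x. \<Sum>k=0..n. complex_of_real (Ccoef k n a) *
           exp (\<i> * complex_of_real (p \<bullet> x / hbar) * complex_of_real (1 - 2 * real k / real n)))
      = (\<lambda>n x. H a 1 n (\<i> * complex_of_real (p \<bullet> x / hbar) * 1))"
    by (simp add: H_def)
  have eA2: "(\<lambda>x. exp (\<i> * complex_of_real (a * (p \<bullet> x) / hbar)))
      = (\<lambda>x. exp (\<i> * complex_of_real (p \<bullet> x / hbar) * 1 * complex_of_real (a ^ 1)))"
    by (rule ext) (simp add: mult_ac)
  have eB1: "\<And>q. (\<lambda>n x. \<Sum>k=0..n. complex_of_real (Ccoef k n a) *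
           exp (\<i> * complex_of_real (p \<bullet> x / hbar) * (- \<i>) ^ q * complex_of_real ((1 - 2 * real k / real n) ^ q)))
      = (\<lambda>n x. H a q n (\<i> * complex_of_real (p \<bullet> x / hbar) * (- \<i>) ^ q))"
    by (simp add: H_def)
  have pw: "\<And>q. (- \<i> * complex_of_real a) ^ q = (- \<i>) ^ q * complex_of_real a ^ q"
    by (rule power_mult_distrib)
  have eB2: "\<And>q. (\<lambda>x. exp (\<i> * complex_of_real (p \<bullet> x) * (- \<i> * complex_of_real a) ^ q / complex_of_real hbar))
      = (\<lambda>x. exp (\<i> * complex_of_real (p \<bullet> x / hbar) * (- \<i>) ^ q * complex_of_real (a ^ q)))"
    by (rule ext) (simp only: pw, simp add: mult_ac)
  have eC1: "\<And>q. (\<lambda>n x. \<Sum>k=0..n. complex_of_real (Ccoef k n a) *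
           exp (complex_of_real (p \<bullet> x / hbar) * (- \<i>) ^ q * complex_of_real ((1 - 2 * real k / real n) ^ q)))
      = (\<lambda>n x. H a q n (1 * complex_of_real (p \<bullet> x / hbar) * (- \<i>) ^ q))"
    by (simp add: H_def)
  have eC2: "\<And>q. (\<lambda>x. exp (complex_of_real (p \<bullet> x) * (- \<i> * complex_of_real a) ^ q / complex_of_real hbar))
      = (\<lambda>x. exp (1 * complex_of_real (p \<bullet> x / hbar) * (- \<i>) ^ q * complex_of_real (a ^ q)))"
    by (rule ext) (simp only: pw, simp add: mult_ac)
  show ?thesis
  proof (intro conjI allI impI)
    fix x :: "real ^ 'd"
    show "(\<lambda>n. \<Sum>k=0..n. complex_of_real (Ccoef k n a) *
           exp (\<i> * complex_of_real (p \<bullet> x / hbar) * complex_of_real (1 - 2 * real k / real n)))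
       \<longlonglongrightarrow> exp (\<i> * complex_of_real (a * (p \<bullet> x) / hbar))"
      using P[where c="\<i>" and d=1 and q=1 and x=x] fun_cong[OF fun_cong[OF eA1], of _ x] fun_cong[OF eA2, of x] by simp
  next
    fix K :: "(real ^ 'd) set" assume "compact K"
    then show "uniform_limit K
         (\<lambda>n x. \<Sum>k=0..n. complex_of_real (Ccoef k n a) *
           exp (\<i> * complex_of_real (p \<bullet> x / hbar) * complex_of_real (1 - 2 * real k / real n)))
         (\<lambda>x. exp (\<i> * complex_of_real (a * (p \<bullet> x) / hbar))) sequentially"
      unfolding eA1 eA2 by (rule G)
  next
    fix q :: nat and x :: "real ^ 'd"
    show "(\<lambda>n. \<Sum>k=0..n. complex_of_real (Ccoef k n a) *
           exp (\<i> * complex_of_real (p \<bullet> x / hbar) * (- \<i>) ^ q * complex_of_real ((1 - 2 * real k / real n) ^ q)))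
       \<longlonglongrightarrow> exp (\<i> * complex_of_real (p \<bullet> x) * (- \<i> * complex_of_real a) ^ q / complex_of_real hbar)"
      using P[where c="\<i>" and d="(- \<i>) ^ q" and q=q and x=x] fun_cong[OF fun_cong[OF eB1[of q]], of _ x] fun_cong[OF eB2[of q], of x] by simp
  next
    fix q :: nat and K :: "(real ^ 'd) set" assume "compact K"
    then show "uniform_limit K
         (\<lambda>n x. \<Sum>k=0..n. complex_of_real (Ccoef k n a) *
           exp (\<i> * complex_of_real (p \<bullet> x / hbar) * (- \<i>) ^ q * complex_of_real ((1 - 2 * real k / real n) ^ q)))
         (\<lambda>x. exp (\<i> * complex_of_real (p \<bullet> x) * (- \<i> * complex_of_real a) ^ q / complex_of_real hbar))
         sequentially"
      unfolding eB1 eB2 by (rule G)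
  next
    fix q :: nat and x :: "real ^ 'd"
    show "(\<lambda>n. \<Sum>k=0..n. complex_of_real (Ccoef k n a) *
           exp (complex_of_real (p \<bullet> x / hbar) * (- \<i>) ^ q * complex_of_real ((1 - 2 * real k / real n) ^ q)))
       \<longlonglongrightarrow> exp (complex_of_real (p \<bullet> x) * (- \<i> * complex_of_real a) ^ q / complex_of_real hbar)"
      using P[where c=1 and d="(- \<i>) ^ q" and q=q and x=x] fun_cong[OF fun_cong[OF eC1[of q]], of _ x] fun_cong[OF eC2[of q], of x] by simp
  next
    fix q :: nat and K :: "(real ^ 'd) set" assume "compact K"
    then show "uniform_limit K
         (\<lambda>n x. \<Sum>k=0..n. complex_of_real (Ccoef k n a) *
           exp (complex_of_real (p \<bullet> x / hbar) * (- \<i>) ^ q * complex_of_real ((1 - 2 * real k / real n) ^ q)))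
         (\<lambda>x. exp (complex_of_real (p \<bullet> x) * (- \<i> * complex_of_real a) ^ q / complex_of_real hbar))
         sequentially"
      unfolding eC1 eC2 by (rule G)
  qed
qed

end
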